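(* Let $M$ be an $\mathbf{FB}$-module and $a:\mathrm{Sym}(\mathbf V)\otimes M\to\mathrm{Sym}(\mathbf V)\otimes M$ a map, with associated symmetric operation $\phi$ given by $a(t^B\otimes x)=\sum_{A\subseteq S}t^A\otimes\phi^S_{A,B}(x)$ for $B\subseteq S$, $x\in M(S\setminus B)$. Then $a$ defines a representation of $\underline{\mathfrak a}(\mathbf V\oplus\mathbf V^* )$ if and only if $\phi$ satisfies the following for all finite sets $S$ and subsets $A,B,C,D\subseteq S$ with $A\cap B=\emptyset$, $C\cap D=\emptyset$: (B1) if $A\cap C=B\cap D=\emptyset$, then $\phi^{S\setminus C}_{D,A}\circ\phi^{S\setminus A}_{C,B}=\phi^{S\setminus D}_{C,B}\circ\phi^{S\setminus B}_{D,A}$; (B2) if $A\cap C=\emptyset$ and $B\cap D\ne\emptyset$, then $\phi^{S\setminus C}_{D,A}\circ\phi^{S\setminus A}_{C,B}=\sum_{\emptyset\ne X\subseteq B\cap D}\phi^{S\setminus X}_{(D\setminus X)\cup C,\,A\cup(B\setminus X)}$; (B3) if $A\cap C\ne\emptyset$ and $B\cap D\ne\emptyset$, then $\sum_{X\subseteq B\cap D}\phi^{S\setminus X}_{(D\setminus X)\cup C,\,A\cup(B\setminus X)}=\sum_{X\subseteq A\cap C}\phi^{S\setminus X}_{(C\setminus X)\cup D,\,B\cup(A\setminus X)}$.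
   Context: $k$ is a commutative ring; $\mathbf{FB}$-modules are functors from finite sets and bijections to $k$-modules, $(M\otimes N)(S)=\bigoplus_{T\subseteq S}M(T)\otimes N(S\setminus T)$, symmetry $\tau$. $\mathbf V$ is $k$ on singletons, $0$ otherwise. $P=\mathrm{Sym}(\mathbf V)=\bigoplus_n\mathrm{Sym}^n(\mathbf V)$ with $\mathrm{Sym}^n(\mathbf V)(S)$ free on $t^S$ if $|S|=n$ and $0$ otherwise, so $(P\otimes M)(S)=\bigoplus_{B\subseteq S}t^B\otimes M(S\setminus B)$; divided powers are identified with $P$ via the averaging isomorphism. $m(t^A\otimes t^B)=t^{A\cup B}$, $\Delta(t^B)=\sum_{B=B_1\sqcup B_2}t^{B_1}\otimes t^{B_2}$. $a$ is a representation of the curried Weyl Lie algebra $\underline{\mathfrak a}(\mathbf V\oplus\mathbf V^* )$ if $[a_1,a_2]=a'-a''$, where $a_2=\mathrm{id}_P\otimes a$, $a_1=\tau(\mathrm{id}_P\otimes a)\tau$, $[a_1,a_2]=a_1a_2-a_2a_1:P\otimes P\otimes M\to P\otimes P\otimes M$, $a'=(m\otimes\mathrm{id}\otimes\mathrm{id})(\mathrm{id}\otimes\Delta\otimes\mathrm{id})(\mathrm{id}_P\otimes a)(\mathrm{id}\otimes m\otimes\mathrm{id})(\tau\otimes\mathrm{id}\otimes\mathrm{id})(\mathrm{id}\otimes\Delta\otimes\mathrm{id})$, $a''=\tau a'\tau$. The maps $\phi^S_{A,B}:M(S\setminus B)\to M(S\setminus A)$ are natural in bijections. *)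

theory Defs
  imports "HOL.Modules"
begin

text \<open>
  Finite sets are the finite subsets of a type 'u. An FB-module M is modelled
  by a family of k-submodules M S (S finite) of an ambient k-module 'm (scalar action scale),
  together with actions act sigma S : M S -> M (sigma ` S) for bijections sigma : S -> sigma ` S.

  (P (x) M)(S) = (+)_{B subset S} t^B (x) M(S - B) is represented by functions
  f :: 'u set => 'm with f B in M (S - B) for B subset S and f B = 0 otherwise
  (f B is the coefficient of t^B).
  (P (x) P (x) M)(S) is represented by g :: 'u set => 'u set => 'm, with g B1 B2 the
  coefficient of t^B1 (x) t^B2, and (P (x) P (x) P (x) M)(S) similarly with three arguments.
\<close>

definition lin_on :: "('k::comm_ring_1 \<Rightarrow> 'm::ab_group_add \<Rightarrow> 'm) \<Rightarrow> 'm set \<Rightarrow> 'm set \<Rightarrow> ('m \<Rightarrow> 'm) \<Rightarrow> bool"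
  where "lin_on scale X Y f \<longleftrightarrow> (\<forall>x\<in>X. f x \<in> Y) \<and> (\<forall>x\<in>X. \<forall>y\<in>X. f (x + y) = f x + f y)
      \<and> (\<forall>c. \<forall>x\<in>X. f (scale c x) = scale c (f x))"

definition FB_module ::
  "('k::comm_ring_1 \<Rightarrow> 'm::ab_group_add \<Rightarrow> 'm) \<Rightarrow> ('u set \<Rightarrow> 'm set) \<Rightarrow> (('u \<Rightarrow> 'u) \<Rightarrow> 'u set \<Rightarrow> 'm \<Rightarrow> 'm) \<Rightarrow> bool"
  where "FB_module scale M act \<longleftrightarrow>
     module scale \<and>
     (\<forall>S. finite S \<longrightarrow> 0 \<in> M S \<and> (\<forall>x\<in>M S. \<forall>y\<in>M S. x + y \<in> M S) \<and> (\<forall>c. \<forall>x\<in>M S. scale c x \<in> M S)) \<and>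
     (\<forall>S \<sigma>. finite S \<and> inj_on \<sigma> S \<longrightarrow> lin_on scale (M S) (M (\<sigma> ` S)) (act \<sigma> S)) \<and>
     (\<forall>S \<sigma> \<sigma>'. finite S \<and> inj_on \<sigma> S \<and> (\<forall>s\<in>S. \<sigma> s = \<sigma>' s) \<longrightarrow> (\<forall>x\<in>M S. act \<sigma> S x = act \<sigma>' S x)) \<and>
     (\<forall>S. finite S \<longrightarrow> (\<forall>x\<in>M S. act id S x = x)) \<and>
     (\<forall>S \<sigma> \<rho>. finite S \<and> inj_on \<sigma> S \<and> inj_on \<rho> (\<sigma> ` S) \<longrightarrow>
        (\<forall>x\<in>M S. act (\<rho> \<circ> \<sigma>) S x = act \<rho> (\<sigma> ` S) (act \<sigma> S x)))"

definition PM_elem :: "('u set \<Rightarrow> 'm::zero set) \<Rightarrow> 'u set \<Rightarrow> ('u set \<Rightarrow> 'm) \<Rightarrow> bool"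
  where "PM_elem M S f \<longleftrightarrow> (\<forall>B. if B \<subseteq> S then f B \<in> M (S - B) else f B = 0)"

definition PPM_elem :: "('u set \<Rightarrow> 'm::zero set) \<Rightarrow> 'u set \<Rightarrow> ('u set \<Rightarrow> 'u set \<Rightarrow> 'm) \<Rightarrow> bool"
  where "PPM_elem M S g \<longleftrightarrow> (\<forall>B1 B2. if B1 \<subseteq> S \<and> B2 \<subseteq> S \<and> B1 \<inter> B2 = {}
      then g B1 B2 \<in> M (S - B1 - B2) else g B1 B2 = 0)"

definition single :: "'u set \<Rightarrow> 'm::zero \<Rightarrow> 'u set \<Rightarrow> 'm"
  where "single B x = (\<lambda>B'. if B' = B then x else 0)"

definition PM_linear_endo ::
  "('k::comm_ring_1 \<Rightarrow> 'm::ab_group_add \<Rightarrow> 'm) \<Rightarrow> ('u set \<Rightarrow> 'm set) \<Rightarrow> ('u set \<Rightarrow> ('u set \<Rightarrow> 'm) \<Rightarrow> 'u set \<Rightarrow> 'm) \<Rightarrow> bool"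
  where "PM_linear_endo scale M a \<longleftrightarrow> (\<forall>S. finite S \<longrightarrow>
     (\<forall>f. PM_elem M S f \<longrightarrow> PM_elem M S (a S f)) \<and>
     (\<forall>f g. PM_elem M S f \<and> PM_elem M S g \<longrightarrow> a S (\<lambda>B. f B + g B) = (\<lambda>A. a S f A + a S g A)) \<and>
     (\<forall>c f. PM_elem M S f \<longrightarrow> a S (\<lambda>B. scale c (f B)) = (\<lambda>A. scale c (a S f A))))"

definition assoc_op ::
  "('u set \<Rightarrow> 'm::zero set) \<Rightarrow> ('u set \<Rightarrow> ('u set \<Rightarrow> 'm) \<Rightarrow> 'u set \<Rightarrow> 'm) \<Rightarrow> ('u set \<Rightarrow> 'u set \<Rightarrow> 'u set \<Rightarrow> 'm \<Rightarrow> 'm) \<Rightarrow> bool"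
  where "assoc_op M a \<phi> \<longleftrightarrow> (\<forall>S B x. finite S \<and> B \<subseteq> S \<and> x \<in> M (S - B) \<longrightarrow>
      a S (single B x) = (\<lambda>A. if A \<subseteq> S then \<phi> S A B x else 0))"

definition natural_op ::
  "('u set \<Rightarrow> 'm set) \<Rightarrow> (('u \<Rightarrow> 'u) \<Rightarrow> 'u set \<Rightarrow> 'm \<Rightarrow> 'm) \<Rightarrow> ('u set \<Rightarrow> 'u set \<Rightarrow> 'u set \<Rightarrow> 'm \<Rightarrow> 'm) \<Rightarrow> bool"
  where "natural_op M act \<phi> \<longleftrightarrow> (\<forall>S \<sigma> A B. finite S \<and> inj_on \<sigma> S \<and> A \<subseteq> S \<and> B \<subseteq> S \<longrightarrow>
      (\<forall>x\<in>M (S - B). act \<sigma> (S - A) (\<phi> S A B x) = \<phi> (\<sigma> ` S) (\<sigma> ` A) (\<sigma> ` B) (act \<sigma> (S - B) x)))"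

text \<open>id_P (x) a on (P (x) P (x) M)(S) = (+)_{B1} t^B1 (x) (P (x) M)(S - B1).\<close>
definition a2 :: "('u set \<Rightarrow> ('u set \<Rightarrow> 'm::zero) \<Rightarrow> 'u set \<Rightarrow> 'm) \<Rightarrow> 'u set \<Rightarrow> ('u set \<Rightarrow> 'u set \<Rightarrow> 'm) \<Rightarrow> 'u set \<Rightarrow> 'u set \<Rightarrow> 'm"
  where "a2 a S g = (\<lambda>B1 B2. if B1 \<subseteq> S then a (S - B1) (g B1) B2 else 0)"

definition tau :: "('u set \<Rightarrow> 'u set \<Rightarrow> 'm) \<Rightarrow> 'u set \<Rightarrow> 'u set \<Rightarrow> 'm"
  where "tau g = (\<lambda>B1 B2. g B2 B1)"

definition a1 :: "('u set \<Rightarrow> ('u set \<Rightarrow> 'm::zero) \<Rightarrow> 'u set \<Rightarrow> 'm) \<Rightarrow> 'u set \<Rightarrow> ('u set \<Rightarrow> 'u set \<Rightarrow> 'm) \<Rightarrow> 'u set \<Rightarrow> 'u set \<Rightarrow> 'm"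
  where "a1 a S g = tau (a2 a S (tau g))"

text \<open>id (x) Delta (x) id : P(x)P(x)M -> P(x)P(x)P(x)M.\<close>
definition Delta_mid :: "('u set \<Rightarrow> 'u set \<Rightarrow> 'm::zero) \<Rightarrow> 'u set \<Rightarrow> 'u set \<Rightarrow> 'u set \<Rightarrow> 'm"
  where "Delta_mid g = (\<lambda>B U V. if U \<inter> V = {} then g B (U \<union> V) else 0)"

definition tau_fst :: "('u set \<Rightarrow> 'u set \<Rightarrow> 'u set \<Rightarrow> 'm) \<Rightarrow> 'u set \<Rightarrow> 'u set \<Rightarrow> 'u set \<Rightarrow> 'm"
  where "tau_fst h = (\<lambda>X Y Z. h Y X Z)"

text \<open>id (x) m (x) id and m (x) id (x) id : P(x)P(x)P(x)M -> P(x)P(x)M.\<close>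
definition m_mid :: "('u set \<Rightarrow> 'u set \<Rightarrow> 'u set \<Rightarrow> 'm::comm_monoid_add) \<Rightarrow> 'u set \<Rightarrow> 'u set \<Rightarrow> 'm"
  where "m_mid h = (\<lambda>X Y. \<Sum>V\<in>Pow Y. h X (Y - V) V)"

definition m_fst :: "('u set \<Rightarrow> 'u set \<Rightarrow> 'u set \<Rightarrow> 'm::comm_monoid_add) \<Rightarrow> 'u set \<Rightarrow> 'u set \<Rightarrow> 'm"
  where "m_fst h = (\<lambda>Y Z. \<Sum>V\<in>Pow Y. h (Y - V) V Z)"

definition a_prime :: "('u set \<Rightarrow> ('u set \<Rightarrow> 'm::comm_monoid_add) \<Rightarrow> 'u set \<Rightarrow> 'm) \<Rightarrow> 'u set \<Rightarrow> ('u set \<Rightarrow> 'u set \<Rightarrow> 'm) \<Rightarrow> 'u set \<Rightarrow> 'u set \<Rightarrow> 'm"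
  where "a_prime a S g = m_fst (Delta_mid (a2 a S (m_mid (tau_fst (Delta_mid g)))))"

definition a_dprime :: "('u set \<Rightarrow> ('u set \<Rightarrow> 'm::comm_monoid_add) \<Rightarrow> 'u set \<Rightarrow> 'm) \<Rightarrow> 'u set \<Rightarrow> ('u set \<Rightarrow> 'u set \<Rightarrow> 'm) \<Rightarrow> 'u set \<Rightarrow> 'u set \<Rightarrow> 'm"
  where "a_dprime a S g = tau (a_prime a S (tau g))"

definition is_weyl_rep :: "('u set \<Rightarrow> 'm::ab_group_add set) \<Rightarrow> ('u set \<Rightarrow> ('u set \<Rightarrow> 'm) \<Rightarrow> 'u set \<Rightarrow> 'm) \<Rightarrow> bool"
  where "is_weyl_rep M a \<longleftrightarrow> (\<forall>S g. finite S \<and> PPM_elem M S g \<longrightarrow>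
      (\<forall>B1 B2. a1 a S (a2 a S g) B1 B2 - a2 a S (a1 a S g) B1 B2
             = a_prime a S g B1 B2 - a_dprime a S g B1 B2))"

definition cond_B1 :: "('u set \<Rightarrow> 'm set) \<Rightarrow> ('u set \<Rightarrow> 'u set \<Rightarrow> 'u set \<Rightarrow> 'm \<Rightarrow> 'm) \<Rightarrow> bool"
  where "cond_B1 M \<phi> \<longleftrightarrow> (\<forall>S A B C D. finite S \<and> A \<subseteq> S \<and> B \<subseteq> S \<and> C \<subseteq> S \<and> D \<subseteq> S \<and>
      A \<inter> B = {} \<and> C \<inter> D = {} \<and> A \<inter> C = {} \<and> B \<inter> D = {} \<longrightarrow>
      (\<forall>x\<in>M (S - A - B). \<phi> (S - C) D A (\<phi> (S - A) C B x) = \<phi> (S - D) C B (\<phi> (S - B) D A x)))"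

definition cond_B2 :: "('u set \<Rightarrow> 'm::comm_monoid_add set) \<Rightarrow> ('u set \<Rightarrow> 'u set \<Rightarrow> 'u set \<Rightarrow> 'm \<Rightarrow> 'm) \<Rightarrow> bool"
  where "cond_B2 M \<phi> \<longleftrightarrow> (\<forall>S A B C D. finite S \<and> A \<subseteq> S \<and> B \<subseteq> S \<and> C \<subseteq> S \<and> D \<subseteq> S \<and>
      A \<inter> B = {} \<and> C \<inter> D = {} \<and> A \<inter> C = {} \<and> B \<inter> D \<noteq> {} \<longrightarrow>
      (\<forall>x\<in>M (S - A - B). \<phi> (S - C) D A (\<phi> (S - A) C B x) =
         (\<Sum>X\<in>Pow (B \<inter> D) - {{}}. \<phi> (S - X) ((D - X) \<union> C) (A \<union> (B - X)) x)))"

definition cond_B3 :: "('u set \<Rightarrow> 'm::comm_monoid_add set) \<Rightarrow> ('u set \<Rightarrow> 'u set \<Rightarrow> 'u set \<Rightarrow> 'm \<Rightarrow> 'm) \<Rightarrow> bool"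
  where "cond_B3 M \<phi> \<longleftrightarrow> (\<forall>S A B C D. finite S \<and> A \<subseteq> S \<and> B \<subseteq> S \<and> C \<subseteq> S \<and> D \<subseteq> S \<and>
      A \<inter> B = {} \<and> C \<inter> D = {} \<and> A \<inter> C \<noteq> {} \<and> B \<inter> D \<noteq> {} \<longrightarrow>
      (\<forall>x\<in>M (S - A - B).
         (\<Sum>X\<in>Pow (B \<inter> D). \<phi> (S - X) ((D - X) \<union> C) (A \<union> (B - X)) x) =
         (\<Sum>X\<in>Pow (A \<inter> C). \<phi> (S - X) ((C - X) \<union> D) (B \<union> (A - X)) x)))"

end

theory Submission imports Defs begin

definition single2 :: "'u set \<Rightarrow> 'u set \<Rightarrow> 'm::zero \<Rightarrow> 'u set \<Rightarrow> 'u set \<Rightarrow> 'm"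
  where "single2 P Q x = (\<lambda>B1 B2. if B1 = P \<and> B2 = Q then x else 0)"

definition Dd where
  "Dd a S g C A = a1 a S (a2 a S g) C A - a2 a S (a1 a S g) C A - (a_prime a S g C A - a_dprime a S g C A)"

definition EE :: "('u set \<Rightarrow> 'u set \<Rightarrow> 'u set \<Rightarrow> 'm \<Rightarrow> 'm) \<Rightarrow> 'u set \<Rightarrow> 'u set \<Rightarrow> 'u set \<Rightarrow> 'm \<Rightarrow> 'u set \<Rightarrow> 'u set \<Rightarrow> 'm::ab_group_add" where
  "EE \<phi> S P Q x C A = (if A \<inter> P = {} then \<phi> (S - A) C P (\<phi> (S - P) A Q x) else 0)
     - (if C \<inter> Q = {} then \<phi> (S - C) A Q (\<phi> (S - Q) C P x) else 0)
     - ((\<Sum>U\<in>Pow (Q \<inter> C). \<phi> (S - U) ((C - U) \<union> A) (P \<union> (Q - U)) x)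
       - (\<Sum>U\<in>Pow (P \<inter> A). \<phi> (S - U) ((A - U) \<union> C) (Q \<union> (P - U)) x))"

lemma diff_swap: "(S::'a set) - A - B = S - B - A" by blast

context
  fixes M :: "'u set \<Rightarrow> 'm::ab_group_add set"
    and a :: "'u set \<Rightarrow> ('u set \<Rightarrow> 'm) \<Rightarrow> 'u set \<Rightarrow> 'm"
    and \<phi> :: "'u set \<Rightarrow> 'u set \<Rightarrow> 'u set \<Rightarrow> 'm \<Rightarrow> 'm"
  assumes M0: "\<And>T. finite T \<Longrightarrow> 0 \<in> M T"
    and Madd: "\<And>T x y. finite T \<Longrightarrow> x \<in> M T \<Longrightarrow> y \<in> M T \<Longrightarrow> x + y \<in> M T"
    and a_pres: "\<And>S f. finite S \<Longrightarrow> PM_elem M S f \<Longrightarrow> PM_elem M S (a S f)"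
    and a_add: "\<And>S f g. finite S \<Longrightarrow> PM_elem M S f \<Longrightarrow> PM_elem M S g \<Longrightarrow>
        a S (\<lambda>B. f B + g B) = (\<lambda>A. a S f A + a S g A)"
    and aop: "assoc_op M a \<phi>"
begin

lemma PM_zero: "finite S \<Longrightarrow> PM_elem M S (\<lambda>_. 0)"
  unfolding PM_elem_def using M0 by auto

lemma a_zero: assumes "finite S" shows "a S (\<lambda>_. 0) = (\<lambda>_. 0)"
proof
  fix A
  have "a S (\<lambda>B. 0 + 0) = (\<lambda>A. a S (\<lambda>_. 0) A + a S (\<lambda>_. 0) A)"
    using a_add[OF assms PM_zero[OF assms] PM_zero[OF assms]] .
  then have "a S (\<lambda>_. 0) A = a S (\<lambda>_. 0) A + a S (\<lambda>_. 0) A" by (metis add.right_neutral)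
  then show "a S (\<lambda>_. 0) A = 0" by simp
qed

lemma a_single: "finite S \<Longrightarrow> B \<subseteq> S \<Longrightarrow> z \<in> M (S - B) \<Longrightarrow>
   a S (single B z) A = (if A \<subseteq> S then \<phi> S A B z else 0)"
  using aop unfolding assoc_op_def by auto

lemma PM_single: "finite S \<Longrightarrow> B \<subseteq> S \<Longrightarrow> z \<in> M (S - B) \<Longrightarrow> PM_elem M S (single B z)"
  unfolding PM_elem_def single_def using M0 by auto

lemma phi_mem: assumes "finite S" "B \<subseteq> S" "z \<in> M (S - B)" "A \<subseteq> S"
  shows "\<phi> S A B z \<in> M (S - A)"
proof -
  have "PM_elem M S (a S (single B z))" using a_pres[OF assms(1) PM_single[OF assms(1-3)]] .
  then have "a S (single B z) A \<in> M (S - A)" using assms(4) unfolding PM_elem_def by meson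
  then show ?thesis using a_single[OF assms(1-3)] assms(4) by simp
qed

lemma single_0: "single B 0 = (\<lambda>_. 0)" unfolding single_def by auto

lemma a2_single2:
  assumes "finite S" "P \<subseteq> S" "Q \<subseteq> S" "P \<inter> Q = {}" "x \<in> M (S - P - Q)"
  shows "a2 a S (single2 P Q x) B1 B2 = (if B1 = P \<and> B2 \<subseteq> S - P then \<phi> (S - P) B2 Q x else 0)"
proof (cases "B1 = P")
  case True
  have e: "single2 P Q x P = single Q x" unfolding single2_def single_def by auto
  have "Q \<subseteq> S - P" using assms by blast
  moreover have "a2 a S (single2 P Q x) P B2 = a (S - P) (single Q x) B2"
    unfolding a2_def e using assms by simp
  ultimately show ?thesis using True assms a_single[of "S - P" Q x B2] by (simp add: diff_swap)
next
  case False
  have e: "single2 P Q x B1 = (\<lambda>_. 0)" unfolding single2_def using False by auto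
  show ?thesis using False a_zero[of "S - B1"] assms(1) unfolding a2_def e by auto
qed

lemma T1:
  assumes "finite S" "P \<subseteq> S" "Q \<subseteq> S" "P \<inter> Q = {}" "x \<in> M (S - P - Q)"
  shows "a1 a S (a2 a S (single2 P Q x)) C A =
    (if A \<subseteq> S \<and> A \<inter> P = {} \<and> C \<subseteq> S - A then \<phi> (S - A) C P (\<phi> (S - P) A Q x) else 0)"
proof -
  let ?h = "a2 a S (single2 P Q x)"
  have 1: "a1 a S ?h C A = (if A \<subseteq> S then a (S - A) (tau ?h A) C else 0)"
    unfolding a1_def a2_def tau_def by simp
  have 2: "tau ?h A = (\<lambda>B. if B = P \<and> A \<subseteq> S - P then \<phi> (S - P) A Q x else 0)"
    unfolding tau_def using a2_single2[OF assms] by auto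
  show ?thesis
  proof (cases "A \<subseteq> S - P")
    case True
    then have e: "tau ?h A = single P (\<phi> (S - P) A Q x)" unfolding 2 single_def by auto
    have "Q \<subseteq> S - P" "x \<in> M (S - P - Q)" using assms by auto
    then have m: "\<phi> (S - P) A Q x \<in> M (S - A - P)"
      using phi_mem[of "S - P" Q x A] True assms(1) by (simp add: diff_swap)
    have "P \<subseteq> S - A" using True assms by blast
    then show ?thesis using True assms(1) a_single[OF _ _ m, of C] unfolding 1 e by auto
  next
    case False
    then have e: "tau ?h A = (\<lambda>_. 0)" unfolding 2 by auto
    show ?thesis using False assms(1) a_zero[of "S - A"] unfolding 1 e by auto
  qed
qed

lemma tau_single2: "tau (single2 P Q x) = single2 Q P x"
  unfolding tau_def single2_def by (intro ext) auto

lemma T2: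
  assumes "finite S" "P \<subseteq> S" "Q \<subseteq> S" "P \<inter> Q = {}" "x \<in> M (S - P - Q)"
  shows "a2 a S (a1 a S (single2 P Q x)) C A =
    (if C \<subseteq> S \<and> C \<inter> Q = {} \<and> A \<subseteq> S - C then \<phi> (S - C) A Q (\<phi> (S - Q) C P x) else 0)"
proof -
  have x': "x \<in> M (S - Q - P)" using assms(5) by (simp add: diff_swap)
  let ?h = "a1 a S (single2 P Q x)"
  have 1: "a2 a S ?h C A = (if C \<subseteq> S then a (S - C) (?h C) A else 0)"
    unfolding a2_def by simp
  have 2: "?h C = (\<lambda>B. if B = Q \<and> C \<subseteq> S - Q then \<phi> (S - Q) C P x else 0)"
    unfolding a1_def tau_single2 using a2_single2[OF assms(1,3,2) _ x'] assms(4) by (auto simp: tau_def)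
  show ?thesis
  proof (cases "C \<subseteq> S - Q")
    case True
    then have e: "?h C = single Q (\<phi> (S - Q) C P x)" unfolding 2 single_def by auto
    have "P \<subseteq> S - Q" using assms by blast
    then have m: "\<phi> (S - Q) C P x \<in> M (S - C - Q)"
      using phi_mem[of "S - Q" P x C] True assms(1) x' by (simp add: diff_swap)
    have "Q \<subseteq> S - C" using True assms by blast
    then show ?thesis using True assms(1) a_single[OF _ _ m, of A] unfolding 1 e by auto
  next
    case False
    then have e: "?h C = (\<lambda>_. 0)" unfolding 2 by auto
    show ?thesis using False assms(1) a_zero[of "S - C"] unfolding 1 e by auto
  qed
qed

lemma k_single2:
  fixes P Q :: "'u set" and x :: 'm
  assumes "finite P" "finite Q" "P \<inter> Q = {}"
  shows "m_mid (tau_fst (Delta_mid (single2 P Q x))) = (\<lambda>X Y. if X \<subseteq> Q \<and> Y = P \<union> (Q - X) then x else 0)"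
proof (intro ext)
  fix X Y :: "'u set"
  have e: "\<And>V. V \<in> Pow Y \<Longrightarrow> (tau_fst (Delta_mid (single2 P Q x))) X (Y - V) V
     = (if V = Q - X then (if X \<subseteq> Q \<and> Y = P \<union> (Q - X) then x else 0) else 0)"
    proof -
    fix V assume V: "V \<in> Pow Y"
    have iff: "(X \<inter> V = {} \<and> Y - V = P \<and> X \<union> V = Q) \<longleftrightarrow> (V = Q - X \<and> X \<subseteq> Q \<and> Y = P \<union> (Q - X))"
      using V assms(3) by blast
    have "(tau_fst (Delta_mid (single2 P Q x))) X (Y - V) V = (if X \<inter> V = {} \<and> Y - V = P \<and> X \<union> V = Q then x else 0)"
      unfolding tau_fst_def Delta_mid_def single2_def by simp
    also have "\<dots> = (if V = Q - X \<and> X \<subseteq> Q \<and> Y = P \<union> (Q - X) then x else 0)"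
      unfolding iff ..
    finally show "?thesis V" by simp
  qed
  show "m_mid (tau_fst (Delta_mid (single2 P Q x))) X Y = (if X \<subseteq> Q \<and> Y = P \<union> (Q - X) then x else 0)"
  proof (cases "finite Y")
    case True
    have "m_mid (tau_fst (Delta_mid (single2 P Q x))) X Y =
       (\<Sum>V\<in>Pow Y. (if V = Q - X then (if X \<subseteq> Q \<and> Y = P \<union> (Q - X) then x else 0) else 0))"
      unfolding m_mid_def using e by (intro sum.cong) auto
    also have "\<dots> = (if X \<subseteq> Q \<and> Y = P \<union> (Q - X) then x else 0)"
      using finite_Pow_iff[THEN iffD2, OF True] by (simp only: sum.delta) auto
    finally show ?thesis .
  next
    case False
    then have "\<not> (Y = P \<union> (Q - X))" using assms by auto
    then show ?thesis using False unfolding m_mid_def by simp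
  qed
qed

lemma T3:
  assumes "finite S" "P \<subseteq> S" "Q \<subseteq> S" "P \<inter> Q = {}" "x \<in> M (S - P - Q)"
  shows "a_prime a S (single2 P Q x) Y Z =
    (if Y \<subseteq> S \<and> Z \<subseteq> S \<and> Y \<inter> Z = {} then
       (\<Sum>U\<in>Pow (Q \<inter> Y). \<phi> (S - U) ((Y - U) \<union> Z) (P \<union> (Q - U)) x) else 0)"
proof -
  have fP: "finite P" "finite Q" using assms(1-3) finite_subset by blast+
  define k where "k = (\<lambda>X Y. if X \<subseteq> Q \<and> Y = P \<union> (Q - X) then x else (0::'m))"
  have k: "m_mid (tau_fst (Delta_mid (single2 P Q x))) = k"
    unfolding k_def using k_single2[OF fP assms(4)] .
  have a2k: "a2 a S k U B2 = (if U \<subseteq> Q \<and> B2 \<subseteq> S - U then \<phi> (S - U) B2 (P \<union> (Q - U)) x else 0)" for U B2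
  proof (cases "U \<subseteq> Q")
    case True
    have e: "k U = single (P \<union> (Q - U)) x" unfolding k_def single_def using True by auto
    have s: "P \<union> (Q - U) \<subseteq> S - U" using True assms by blast
    have "S - U - (P \<union> (Q - U)) = S - P - Q" using True by blast
    then have m: "x \<in> M (S - U - (P \<union> (Q - U)))" using assms by simp
    have "U \<subseteq> S" using True assms by blast
    then show ?thesis unfolding a2_def e using True a_single[OF _ s m] assms(1) by auto
  next
    case False
    have e: "k U = (\<lambda>_. 0)" unfolding k_def using False by auto
    show ?thesis unfolding a2_def e using False a_zero[of "S - U"] assms(1) by auto
  qed
  have ap: "a_prime a S (single2 P Q x) Y Z =
     (\<Sum>V\<in>Pow Y. if V \<inter> Z = {} then a2 a S k (Y - V) (V \<union> Z) else 0)"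
    unfolding a_prime_def k unfolding m_fst_def Delta_mid_def by simp
  show ?thesis
  proof (cases "Y \<subseteq> S \<and> Z \<subseteq> S \<and> Y \<inter> Z = {}")
    case True
    have fY: "finite Y" using True assms(1) finite_subset by auto
    have "a_prime a S (single2 P Q x) Y Z =
       (\<Sum>V\<in>Pow Y. if Y - V \<subseteq> Q then \<phi> (S - (Y - V)) ((Y - (Y - V)) \<union> Z) (P \<union> (Q - (Y - V))) x else 0)"
      unfolding ap a2k
    proof (intro sum.cong refl)
      fix V assume V: "V \<in> Pow Y"
      have f: "V \<inter> Z = {}" "V \<union> Z \<subseteq> S - (Y - V)" "Y - (Y - V) = V" using V True by blast+
      show "(if V \<inter> Z = {} then if Y - V \<subseteq> Q \<and> V \<union> Z \<subseteq> S - (Y - V) then \<phi> (S - (Y - V)) (V \<union> Z) (P \<union> (Q - (Y - V))) x else 0 else 0) =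
        (if Y - V \<subseteq> Q then \<phi> (S - (Y - V)) ((Y - (Y - V)) \<union> Z) (P \<union> (Q - (Y - V))) x else 0)"
        unfolding f(3) using f(1,2) by simp
    qed
    also have "\<dots> = (\<Sum>V\<in>{V\<in>Pow Y. Y - V \<subseteq> Q}. \<phi> (S - (Y - V)) ((Y - (Y - V)) \<union> Z) (P \<union> (Q - (Y - V))) x)"
      using fY by (subst sum.inter_filter) auto
    also have "\<dots> = (\<Sum>U\<in>Pow (Q \<inter> Y). \<phi> (S - U) ((Y - U) \<union> Z) (P \<union> (Q - U)) x)"
      by (rule sum.reindex_bij_witness[where i = "\<lambda>U. Y - U" and j = "\<lambda>V. Y - V"]) auto
    finally show ?thesis using True by simp
  next
    case False
    have "a_prime a S (single2 P Q x) Y Z = 0"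
      unfolding ap a2k
    proof (intro sum.neutral ballI)
      fix V assume V: "V \<in> Pow Y"
      have "\<not> (V \<inter> Z = {} \<and> Y - V \<subseteq> Q \<and> V \<union> Z \<subseteq> S - (Y - V))"
        using V False assms(3) by blast
      then show "(if V \<inter> Z = {} then if Y - V \<subseteq> Q \<and> V \<union> Z \<subseteq> S - (Y - V) then \<phi> (S - (Y - V)) (V \<union> Z) (P \<union> (Q - (Y - V))) x else 0 else 0) = 0"
        by auto
    qed
    then show ?thesis by (simp only: if_not_P[OF False])
  qed
qed

lemma tau_add: "tau (\<lambda>X Y. g1 X Y + g2 X Y) = (\<lambda>X Y. tau g1 X Y + tau g2 X Y)"
  unfolding tau_def by simp

lemma PPM_tau: assumes "PPM_elem M S g" shows "PPM_elem M S (tau g)"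
  unfolding PPM_elem_def tau_def
proof (intro allI)
  fix B1 B2
  have h: "if B2 \<subseteq> S \<and> B1 \<subseteq> S \<and> B2 \<inter> B1 = {} then g B2 B1 \<in> M (S - B2 - B1) else g B2 B1 = 0"
    using assms unfolding PPM_elem_def by blast
  have e1: "(B1 \<subseteq> S \<and> B2 \<subseteq> S \<and> B1 \<inter> B2 = {}) = (B2 \<subseteq> S \<and> B1 \<subseteq> S \<and> B2 \<inter> B1 = {})" by blast
  show "if B1 \<subseteq> S \<and> B2 \<subseteq> S \<and> B1 \<inter> B2 = {} then g B2 B1 \<in> M (S - B1 - B2) else g B2 B1 = 0"
    unfolding e1 diff_swap[of S B1 B2] using h .
qed

lemma PM_row: assumes "PPM_elem M S g" "B1 \<subseteq> S" shows "PM_elem M (S - B1) (g B1)"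
  unfolding PM_elem_def
proof (intro allI)
  fix B
  have h: "if B1 \<subseteq> S \<and> B \<subseteq> S \<and> B1 \<inter> B = {} then g B1 B \<in> M (S - B1 - B) else g B1 B = 0"
    using assms unfolding PPM_elem_def by blast
  have e1: "(B \<subseteq> S - B1) = (B1 \<subseteq> S \<and> B \<subseteq> S \<and> B1 \<inter> B = {})" using assms(2) by blast
  show "if B \<subseteq> S - B1 then g B1 B \<in> M (S - B1 - B) else g B1 B = 0"
    unfolding e1 using h .
qed

lemma PPM_a2: assumes "finite S" "PPM_elem M S g" shows "PPM_elem M S (a2 a S g)"
  unfolding PPM_elem_def
proof (intro allI)
  fix B1 B2
  show "if B1 \<subseteq> S \<and> B2 \<subseteq> S \<and> B1 \<inter> B2 = {} then a2 a S g B1 B2 \<in> M (S - B1 - B2) else a2 a S g B1 B2 = 0"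
  proof (cases "B1 \<subseteq> S")
    case True
    have "PM_elem M (S - B1) (a (S - B1) (g B1))"
      using a_pres[OF _ PM_row[OF assms(2) True]] assms(1) by simp
    then have h: "if B2 \<subseteq> S - B1 then a (S - B1) (g B1) B2 \<in> M (S - B1 - B2) else a (S - B1) (g B1) B2 = 0"
      unfolding PM_elem_def by blast
    have e1: "(B2 \<subseteq> S - B1) = (B1 \<subseteq> S \<and> B2 \<subseteq> S \<and> B1 \<inter> B2 = {})" using True by blast
    show ?thesis using h unfolding e1 a2_def using True by simp
  next
    case False
    then show ?thesis unfolding a2_def by simp
  qed
qed

lemma PPM_a1: assumes "finite S" "PPM_elem M S g" shows "PPM_elem M S (a1 a S g)"
  unfolding a1_def by (intro PPM_tau PPM_a2 assms(1) PPM_tau assms(2))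

lemma a2_add: assumes "finite S" "PPM_elem M S g1" "PPM_elem M S g2"
  shows "a2 a S (\<lambda>X Y. g1 X Y + g2 X Y) = (\<lambda>X Y. a2 a S g1 X Y + a2 a S g2 X Y)"
proof (intro ext)
  fix X Y
  show "a2 a S (\<lambda>X Y. g1 X Y + g2 X Y) X Y = a2 a S g1 X Y + a2 a S g2 X Y"
  proof (cases "X \<subseteq> S")
    case True
    have "a (S - X) (\<lambda>Y. g1 X Y + g2 X Y) = (\<lambda>Y. a (S - X) (g1 X) Y + a (S - X) (g2 X) Y)"
      using a_add[OF _ PM_row[OF assms(2) True] PM_row[OF assms(3) True]] assms(1) by simp
    then show ?thesis unfolding a2_def using True by simp
  next
    case False
    then show ?thesis unfolding a2_def by simp
  qed
qed

lemma a1_add: assumes "finite S" "PPM_elem M S g1" "PPM_elem M S g2"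
  shows "a1 a S (\<lambda>X Y. g1 X Y + g2 X Y) = (\<lambda>X Y. a1 a S g1 X Y + a1 a S g2 X Y)"
  unfolding a1_def tau_add a2_add[OF assms(1) PPM_tau[OF assms(2)] PPM_tau[OF assms(3)]]
  by (simp add: tau_def)

lemma sum_mem: assumes "finite T" "\<And>i. i \<in> I \<Longrightarrow> f i \<in> M T" shows "sum f I \<in> M T"
proof (cases "finite I")
  case True
  show ?thesis using True assms(2)
  proof (induction I rule: finite_induct)
    case empty then show ?case using M0[OF assms(1)] by simp
  next
    case (insert i F) then show ?case using Madd[OF assms(1)] by simp
  qed
next
  case False then show ?thesis using M0[OF assms(1)] by simp
qed

definition kk :: "('u set \<Rightarrow> 'u set \<Rightarrow> 'm) \<Rightarrow> 'u set \<Rightarrow> 'u set \<Rightarrow> 'm"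
  where "kk g = m_mid (tau_fst (Delta_mid g))"

lemma kk_add: "kk (\<lambda>X Y. g1 X Y + g2 X Y) = (\<lambda>X Y. kk g1 X Y + kk g2 X Y)"
  unfolding kk_def m_mid_def tau_fst_def Delta_mid_def
  apply (rule ext)+
  apply (subst sum.distrib[symmetric])
  apply (rule sum.cong)
   apply auto
  done

lemma mD_add: "m_fst (Delta_mid (\<lambda>X Y. g1 X Y + g2 X Y)) = (\<lambda>X Y. m_fst (Delta_mid g1) X Y + m_fst (Delta_mid g2) X Y)"
  unfolding m_fst_def Delta_mid_def
  apply (rule ext)+
  apply (subst sum.distrib[symmetric])
  apply (rule sum.cong)
   apply auto
  done

lemma PPM_kk: assumes "finite S" "PPM_elem M S g" shows "PPM_elem M S (kk g)"
  unfolding PPM_elem_def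
proof (intro allI)
  fix X Y
  have g: "\<And>B1 B2. if B1 \<subseteq> S \<and> B2 \<subseteq> S \<and> B1 \<inter> B2 = {} then g B1 B2 \<in> M (S - B1 - B2) else g B1 B2 = 0"
    using assms(2) unfolding PPM_elem_def by blast
  have kk: "kk g X Y = (\<Sum>V\<in>Pow Y. if X \<inter> V = {} then g (Y - V) (X \<union> V) else 0)"
    unfolding kk_def m_mid_def tau_fst_def Delta_mid_def by simp
  show "if X \<subseteq> S \<and> Y \<subseteq> S \<and> X \<inter> Y = {} then kk g X Y \<in> M (S - X - Y) else kk g X Y = 0"
  proof (cases "X \<subseteq> S \<and> Y \<subseteq> S \<and> X \<inter> Y = {}")
    case True
    have "kk g X Y \<in> M (S - X - Y)" unfolding kk
    proof (rule sum_mem)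
      show "finite (S - X - Y)" using assms(1) by simp
      fix V assume V: "V \<in> Pow Y"
      show "(if X \<inter> V = {} then g (Y - V) (X \<union> V) else 0) \<in> M (S - X - Y)"
      proof (cases "X \<inter> V = {}")
        case True2: True
        have c: "Y - V \<subseteq> S \<and> X \<union> V \<subseteq> S \<and> (Y - V) \<inter> (X \<union> V) = {}" using True True2 V by blast
        have e: "S - (Y - V) - (X \<union> V) = S - X - Y" using V by blast
        show ?thesis using g[of "Y - V" "X \<union> V"] c True2 e by simp
      next
        case False
        then show ?thesis using M0 assms(1) by simp
      qed
    qed
    then show ?thesis using True by simp
  next
    case False
    have z: "kk g X Y = 0" unfolding kk
    proof (intro sum.neutral ballI)
      fix V assume V: "V \<in> Pow Y"
      show "(if X \<inter> V = {} then g (Y - V) (X \<union> V) else 0) = 0"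
      proof (cases "X \<inter> V = {}")
        case True2: True
        have c: "\<not> (Y - V \<subseteq> S \<and> X \<union> V \<subseteq> S \<and> (Y - V) \<inter> (X \<union> V) = {})" using False True2 V by blast
        show ?thesis using g[of "Y - V" "X \<union> V"] c True2 by simp
      qed simp
    qed
    show ?thesis unfolding if_not_P[OF False] by (rule z)
  qed
qed

lemma a_prime_add: assumes "finite S" "PPM_elem M S g1" "PPM_elem M S g2"
  shows "a_prime a S (\<lambda>X Y. g1 X Y + g2 X Y) C A = a_prime a S g1 C A + a_prime a S g2 C A"
  unfolding a_prime_def kk_def[symmetric] kk_add a2_add[OF assms(1) PPM_kk[OF assms(1,2)] PPM_kk[OF assms(1,3)]] mD_add
  by simp

lemma a_dprime_add: assumes "finite S" "PPM_elem M S g1" "PPM_elem M S g2"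
  shows "a_dprime a S (\<lambda>X Y. g1 X Y + g2 X Y) C A = a_dprime a S g1 C A + a_dprime a S g2 C A"
  unfolding a_dprime_def tau_add
  using a_prime_add[OF assms(1) PPM_tau[OF assms(2)] PPM_tau[OF assms(3)]] by (simp add: tau_def)



lemma Dd_add: assumes "finite S" "PPM_elem M S g1" "PPM_elem M S g2"
  shows "Dd a S (\<lambda>X Y. g1 X Y + g2 X Y) C A = Dd a S g1 C A + Dd a S g2 C A"
proof -
  note P1 = PPM_a1[OF assms(1)] and P2 = PPM_a2[OF assms(1)]
  have 1: "a1 a S (a2 a S (\<lambda>X Y. g1 X Y + g2 X Y)) C A = a1 a S (a2 a S g1) C A + a1 a S (a2 a S g2) C A"
    unfolding a2_add[OF assms] a1_add[OF assms(1) P2[OF assms(2)] P2[OF assms(3)]] by simp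
  have 2: "a2 a S (a1 a S (\<lambda>X Y. g1 X Y + g2 X Y)) C A = a2 a S (a1 a S g1) C A + a2 a S (a1 a S g2) C A"
    unfolding a1_add[OF assms] a2_add[OF assms(1) P1[OF assms(2)] P1[OF assms(3)]] by simp
  show ?thesis unfolding Dd_def 1 2 a_prime_add[OF assms] a_dprime_add[OF assms]
    by (simp add: algebra_simps)
qed

lemma PPM_zero2: "finite S \<Longrightarrow> PPM_elem M S (\<lambda>_ _. 0)"
  unfolding PPM_elem_def using M0 by auto

lemma Dd_zero: assumes "finite S" shows "Dd a S (\<lambda>_ _. 0) C A = 0"
proof -
  have "Dd a S (\<lambda>X Y. 0 + 0) C A = Dd a S (\<lambda>_ _. 0) C A + Dd a S (\<lambda>_ _. 0) C A"
    using Dd_add[OF assms PPM_zero2[OF assms] PPM_zero2[OF assms]] .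
  then show ?thesis by simp
qed

lemma PPM_single2: "finite S \<Longrightarrow> P \<subseteq> S \<Longrightarrow> Q \<subseteq> S \<Longrightarrow> P \<inter> Q = {} \<Longrightarrow> x \<in> M (S - P - Q) \<Longrightarrow>
  PPM_elem M S (single2 P Q x)"
  unfolding PPM_elem_def single2_def using M0 by auto

lemma reduce:
  assumes "finite S" "PPM_elem M S g"
    and H: "\<And>P Q x. P \<subseteq> S \<Longrightarrow> Q \<subseteq> S \<Longrightarrow> P \<inter> Q = {} \<Longrightarrow> x \<in> M (S - P - Q) \<Longrightarrow> Dd a S (single2 P Q x) C A = 0"
  shows "Dd a S g C A = 0"
proof -
  let ?Z = "{(P, Q). P \<subseteq> S \<and> Q \<subseteq> S \<and> P \<inter> Q = {}}"
  have fZ: "finite ?Z" by (rule finite_subset[of _ "Pow S \<times> Pow S"]) (auto simp: assms(1))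
  have g: "\<And>B1 B2. if B1 \<subseteq> S \<and> B2 \<subseteq> S \<and> B1 \<inter> B2 = {} then g B1 B2 \<in> M (S - B1 - B2) else g B1 B2 = 0"
    using assms(2) unfolding PPM_elem_def by blast
  define r where "r F = (\<lambda>X Y. if (X, Y) \<in> F then g X Y else 0)" for F
  have PPMr: "PPM_elem M S (r F)" if "F \<subseteq> ?Z" for F
    unfolding PPM_elem_def r_def
  proof (intro allI)
    fix X Y
    show "if X \<subseteq> S \<and> Y \<subseteq> S \<and> X \<inter> Y = {} then (if (X, Y) \<in> F then g X Y else 0) \<in> M (S - X - Y)
          else (if (X, Y) \<in> F then g X Y else 0) = 0"
      using g[of X Y] that M0[of "S - X - Y"] assms(1) by auto
  qed
  have main: "F \<subseteq> ?Z \<Longrightarrow> Dd a S (r F) C A = 0" for F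
  proof -
    assume F: "F \<subseteq> ?Z"
    have "finite F" using F fZ finite_subset by blast
    then show ?thesis using F
    proof (induction F rule: finite_induct)
      case empty
      have "r {} = (\<lambda>_ _. 0)" unfolding r_def by simp
      then show ?case using Dd_zero[OF assms(1)] by simp
    next
      case (insert p F)
      obtain P Q where p: "p = (P, Q)" by fastforce
      have PQ: "P \<subseteq> S" "Q \<subseteq> S" "P \<inter> Q = {}" using insert.prems p by auto
      have x: "g P Q \<in> M (S - P - Q)" using g[of P Q] PQ by simp
      have e: "r (insert p F) = (\<lambda>X Y. r F X Y + single2 P Q (g P Q) X Y)"
        unfolding r_def single2_def p using insert.hyps(2) p by (intro ext) auto
      have "Dd a S (r (insert p F)) C A = Dd a S (r F) C A + Dd a S (single2 P Q (g P Q)) C A"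
        unfolding e by (rule Dd_add[OF assms(1) PPMr PPM_single2[OF assms(1) PQ x]]) (use insert.prems in auto)
      then show ?case using insert.IH insert.prems H[OF PQ x] by simp
    qed
  qed
  have "r ?Z = g" unfolding r_def
  proof (intro ext)
    fix X Y show "(if (X, Y) \<in> ?Z then g X Y else 0) = g X Y" using g[of X Y] by auto
  qed
  then show ?thesis using main[of ?Z] by simp
qed

lemma Dd_single2:
  assumes "finite S" "P \<subseteq> S" "Q \<subseteq> S" "P \<inter> Q = {}" "x \<in> M (S - P - Q)"
  shows "Dd a S (single2 P Q x) C A = (if C \<subseteq> S \<and> A \<subseteq> S \<and> C \<inter> A = {} then EE \<phi> S P Q x C A else 0)"
proof -
  have x': "x \<in> M (S - Q - P)" using assms(5) by (simp add: diff_swap)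
  have dp: "a_dprime a S (single2 P Q x) C A = a_prime a S (single2 Q P x) A C"
    unfolding a_dprime_def tau_single2 by (simp add: tau_def)
  have i: "Q \<inter> P = {}" using assms(4) by blast
  show ?thesis
  proof (cases "C \<subseteq> S \<and> A \<subseteq> S \<and> C \<inter> A = {}")
    case True
    have c1: "(A \<subseteq> S \<and> A \<inter> P = {} \<and> C \<subseteq> S - A) = (A \<inter> P = {})"
      and c2: "(C \<subseteq> S \<and> C \<inter> Q = {} \<and> A \<subseteq> S - C) = (C \<inter> Q = {})"
      and c3: "(A \<subseteq> S \<and> C \<subseteq> S \<and> A \<inter> C = {}) = True"
      using True by blast+
    show ?thesis unfolding Dd_def T1[OF assms] T2[OF assms] dp T3[OF assms] T3[OF assms(1,3,2) i x'] EE_def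
      c1 c2 c3 if_P[OF True] if_True by (rule refl)
  next
    case False
    have c1: "(A \<subseteq> S \<and> A \<inter> P = {} \<and> C \<subseteq> S - A) = False"
      and c2: "(C \<subseteq> S \<and> C \<inter> Q = {} \<and> A \<subseteq> S - C) = False"
      and c3: "(A \<subseteq> S \<and> C \<subseteq> S \<and> A \<inter> C = {}) = False"
      and c4: "(C \<subseteq> S \<and> A \<subseteq> S \<and> C \<inter> A = {}) = False"
      using False by blast+
    show ?thesis unfolding Dd_def T1[OF assms] T2[OF assms] dp T3[OF assms] T3[OF assms(1,3,2) i x']
      c1 c2 c3 c4 if_False by simp
  qed
qed

lemma weyl_iff_EE:
  "is_weyl_rep M a \<longleftrightarrow> (\<forall>S P Q x C A. finite S \<and> P \<subseteq> S \<and> Q \<subseteq> S \<and> P \<inter> Q = {} \<and> x \<in> M (S - P - Q)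
      \<and> C \<subseteq> S \<and> A \<subseteq> S \<and> C \<inter> A = {} \<longrightarrow> EE \<phi> S P Q x C A = 0)"
proof -
  have w: "is_weyl_rep M a \<longleftrightarrow> (\<forall>S g. finite S \<and> PPM_elem M S g \<longrightarrow> (\<forall>C A. Dd a S g C A = 0))"
    unfolding is_weyl_rep_def Dd_def by simp
  show ?thesis unfolding w
  proof (intro iffI allI impI)
    fix S P Q x C A
    assume H: "\<forall>S g. finite S \<and> PPM_elem M S g \<longrightarrow> (\<forall>C A. Dd a S g C A = 0)"
      and v: "finite S \<and> P \<subseteq> S \<and> Q \<subseteq> S \<and> P \<inter> Q = {} \<and> x \<in> M (S - P - Q) \<and> C \<subseteq> S \<and> A \<subseteq> S \<and> C \<inter> A = {}"
    have "Dd a S (single2 P Q x) C A = 0" using H PPM_single2 v by blast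
    then show "EE \<phi> S P Q x C A = 0" using Dd_single2[of S P Q x C A] v by simp
  next
    fix S g C A
    assume H: "\<forall>S P Q x C A. finite S \<and> P \<subseteq> S \<and> Q \<subseteq> S \<and> P \<inter> Q = {} \<and> x \<in> M (S - P - Q)
      \<and> C \<subseteq> S \<and> A \<subseteq> S \<and> C \<inter> A = {} \<longrightarrow> EE \<phi> S P Q x C A = 0"
      and g: "finite S \<and> PPM_elem M S g"
    show "Dd a S g C A = 0"
    proof (rule reduce)
      fix P Q x assume PQ: "P \<subseteq> S" "Q \<subseteq> S" "P \<inter> Q = {}" "x \<in> M (S - P - Q)"
      show "Dd a S (single2 P Q x) C A = 0"
        unfolding Dd_single2[OF _ PQ, OF conjunct1[OF g]] using H PQ g by auto
    qed (use g in auto)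
  qed
qed

end

lemma Pow_split: "finite Z \<Longrightarrow> (\<Sum>U\<in>Pow Z. f U) = f {} + (\<Sum>U\<in>Pow Z - {{}}. f U)"
  by (rule sum.remove) auto

lemma EE_eq:
  fixes \<phi> :: "'u set \<Rightarrow> 'u set \<Rightarrow> 'u set \<Rightarrow> 'm::ab_group_add \<Rightarrow> 'm"
  assumes "finite S" "P \<subseteq> S" "Q \<subseteq> S" "C \<subseteq> S" "A \<subseteq> S"
  shows "EE \<phi> S P Q x C A = (if A \<inter> P = {} then \<phi> (S - A) C P (\<phi> (S - P) A Q x) else 0)
     - (if C \<inter> Q = {} then \<phi> (S - C) A Q (\<phi> (S - Q) C P x) else 0)
     - ((\<Sum>U\<in>Pow (Q \<inter> C) - {{}}. \<phi> (S - U) ((C - U) \<union> A) (P \<union> (Q - U)) x)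
       - (\<Sum>U\<in>Pow (P \<inter> A) - {{}}. \<phi> (S - U) ((A - U) \<union> C) (Q \<union> (P - U)) x))"
    and "(\<Sum>U\<in>Pow (Q \<inter> C). \<phi> (S - U) ((C - U) \<union> A) (P \<union> (Q - U)) x) =
         (\<Sum>U\<in>Pow (P \<inter> A). \<phi> (S - U) ((A - U) \<union> C) (Q \<union> (P - U)) x) \<longleftrightarrow>
         (\<Sum>U\<in>Pow (Q \<inter> C) - {{}}. \<phi> (S - U) ((C - U) \<union> A) (P \<union> (Q - U)) x) =
         (\<Sum>U\<in>Pow (P \<inter> A) - {{}}. \<phi> (S - U) ((A - U) \<union> C) (Q \<union> (P - U)) x)"
proof -
  have f1: "finite (Q \<inter> C)" "finite (P \<inter> A)" using assms finite_subset by blast+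
  have t: "\<phi> (S - {}) ((C - {}) \<union> A) (P \<union> (Q - {})) x = \<phi> (S - {}) ((A - {}) \<union> C) (Q \<union> (P - {})) x"
    by (simp add: Un_commute)
  note s1 = Pow_split[OF f1(1), of "\<lambda>U. \<phi> (S - U) ((C - U) \<union> A) (P \<union> (Q - U)) x"]
  note s2 = Pow_split[OF f1(2), of "\<lambda>U. \<phi> (S - U) ((A - U) \<union> C) (Q \<union> (P - U)) x"]
  show "EE \<phi> S P Q x C A = (if A \<inter> P = {} then \<phi> (S - A) C P (\<phi> (S - P) A Q x) else 0)
     - (if C \<inter> Q = {} then \<phi> (S - C) A Q (\<phi> (S - Q) C P x) else 0)
     - ((\<Sum>U\<in>Pow (Q \<inter> C) - {{}}. \<phi> (S - U) ((C - U) \<union> A) (P \<union> (Q - U)) x)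
       - (\<Sum>U\<in>Pow (P \<inter> A) - {{}}. \<phi> (S - U) ((A - U) \<union> C) (Q \<union> (P - U)) x))"
    unfolding EE_def s1 s2 t by (simp add: algebra_simps)
  show "(\<Sum>U\<in>Pow (Q \<inter> C). \<phi> (S - U) ((C - U) \<union> A) (P \<union> (Q - U)) x) =
         (\<Sum>U\<in>Pow (P \<inter> A). \<phi> (S - U) ((A - U) \<union> C) (Q \<union> (P - U)) x) \<longleftrightarrow>
         (\<Sum>U\<in>Pow (Q \<inter> C) - {{}}. \<phi> (S - U) ((C - U) \<union> A) (P \<union> (Q - U)) x) =
         (\<Sum>U\<in>Pow (P \<inter> A) - {{}}. \<phi> (S - U) ((A - U) \<union> C) (Q \<union> (P - U)) x)"
    unfolding s1 s2 t by simp
qed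

lemma conds_iff:
  fixes M :: "'u set \<Rightarrow> 'm::ab_group_add set" and \<phi> :: "'u set \<Rightarrow> 'u set \<Rightarrow> 'u set \<Rightarrow> 'm \<Rightarrow> 'm"
  shows "(cond_B1 M \<phi> \<and> cond_B2 M \<phi> \<and> cond_B3 M \<phi>) \<longleftrightarrow>
    (\<forall>S P Q x C A. finite S \<and> P \<subseteq> S \<and> Q \<subseteq> S \<and> P \<inter> Q = {} \<and> x \<in> M (S - P - Q)
      \<and> C \<subseteq> S \<and> A \<subseteq> S \<and> C \<inter> A = {} \<longrightarrow> EE \<phi> S P Q x C A = 0)"
proof (intro iffI allI impI)
  fix S P Q x C A
  assume cs: "cond_B1 M \<phi> \<and> cond_B2 M \<phi> \<and> cond_B3 M \<phi>"
    and v: "finite S \<and> P \<subseteq> S \<and> Q \<subseteq> S \<and> P \<inter> Q = {} \<and> x \<in> M (S - P - Q) \<and> C \<subseteq> S \<and> A \<subseteq> S \<and> C \<inter> A = {}"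
  have fin: "finite S" "P \<subseteq> S" "Q \<subseteq> S" "C \<subseteq> S" "A \<subseteq> S" using v by auto
  have ca: "A \<inter> C = {}" "C \<inter> A = {}" using v by auto
  have x': "x \<in> M (S - Q - P)" using v by (simp add: diff_swap)
  note E = EE_eq[OF fin, of \<phi> x]
  have b1: "\<phi> (S - A) C P (\<phi> (S - P) A Q x) = \<phi> (S - C) A Q (\<phi> (S - Q) C P x)"
    if "P \<inter> A = {}" "Q \<inter> C = {}"
    by (rule conjunct1[OF cs, unfolded cond_B1_def, rule_format, of S P Q A C x]) (use v that ca in auto)
  have b2: "\<phi> (S - A) C P (\<phi> (S - P) A Q x) = (\<Sum>X\<in>Pow (Q \<inter> C) - {{}}. \<phi> (S - X) ((C - X) \<union> A) (P \<union> (Q - X)) x)"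
    if "P \<inter> A = {}" "Q \<inter> C \<noteq> {}"
    by (rule conjunct1[OF conjunct2[OF cs], unfolded cond_B2_def, rule_format, of S P Q A C x]) (use v that ca in auto)
  have b2': "\<phi> (S - C) A Q (\<phi> (S - Q) C P x) = (\<Sum>X\<in>Pow (P \<inter> A) - {{}}. \<phi> (S - X) ((A - X) \<union> C) (Q \<union> (P - X)) x)"
    if "Q \<inter> C = {}" "P \<inter> A \<noteq> {}"
  proof -
    have "Q \<inter> P = {}" using v by blast
    show ?thesis by (rule conjunct1[OF conjunct2[OF cs], unfolded cond_B2_def, rule_format, of S Q P C A x]) (use v that ca x' \<open>Q \<inter> P = {}\<close> in auto)
  qed
  have b3: "(\<Sum>X\<in>Pow (Q \<inter> C). \<phi> (S - X) ((C - X) \<union> A) (P \<union> (Q - X)) x) =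
     (\<Sum>X\<in>Pow (P \<inter> A). \<phi> (S - X) ((A - X) \<union> C) (Q \<union> (P - X)) x)"
    if "P \<inter> A \<noteq> {}" "Q \<inter> C \<noteq> {}"
    by (rule conjunct2[OF conjunct2[OF cs], unfolded cond_B3_def, rule_format, of S P Q A C x]) (use v that ca in auto)
  have i1: "(A \<inter> P = {}) = (P \<inter> A = {})" "(C \<inter> Q = {}) = (Q \<inter> C = {})" by blast+
  show "EE \<phi> S P Q x C A = 0"
  proof (cases "P \<inter> A = {}"; cases "Q \<inter> C = {}")
    assume h: "P \<inter> A = {}" "Q \<inter> C = {}"
    show ?thesis unfolding E(1) i1 using h b1[OF h] by simp
  next
    assume h: "P \<inter> A = {}" "Q \<inter> C \<noteq> {}"
    show ?thesis unfolding E(1) i1 using h b2[OF h] by simp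
  next
    assume h: "P \<inter> A \<noteq> {}" "Q \<inter> C = {}"
    show ?thesis unfolding E(1) i1 using h b2'[OF h(2,1)] by simp
  next
    assume h: "P \<inter> A \<noteq> {}" "Q \<inter> C \<noteq> {}"
    show ?thesis unfolding E(1) i1 using h b3[OF h] E(2) by simp
  qed
next
  assume H: "\<forall>S P Q x C A. finite S \<and> P \<subseteq> S \<and> Q \<subseteq> S \<and> P \<inter> Q = {} \<and> x \<in> M (S - P - Q)
      \<and> C \<subseteq> S \<and> A \<subseteq> S \<and> C \<inter> A = {} \<longrightarrow> EE \<phi> S P Q x C A = 0"
  have G: "EE \<phi> S A B x D C = 0"
    if "finite S" "A \<subseteq> S" "B \<subseteq> S" "C \<subseteq> S" "D \<subseteq> S" "A \<inter> B = {}" "C \<inter> D = {}" "x \<in> M (S - A - B)"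
    for S A B C D x
    by (rule H[rule_format, of S A B x D C]) (use that in auto)
  have G3: "(\<Sum>U\<in>Pow (B \<inter> D). \<phi> (S - U) ((D - U) \<union> C) (A \<union> (B - U)) x) =
         (\<Sum>U\<in>Pow (A \<inter> C). \<phi> (S - U) ((C - U) \<union> D) (B \<union> (A - U)) x) \<longleftrightarrow>
         (\<Sum>U\<in>Pow (B \<inter> D) - {{}}. \<phi> (S - U) ((D - U) \<union> C) (A \<union> (B - U)) x) =
         (\<Sum>U\<in>Pow (A \<inter> C) - {{}}. \<phi> (S - U) ((C - U) \<union> D) (B \<union> (A - U)) x)"
    if "finite S" "A \<subseteq> S" "B \<subseteq> S" "C \<subseteq> S" "D \<subseteq> S" for S A B C D x
    by (rule EE_eq(2)[OF that(1,2,3,5,4)])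
  have i1: "\<And>A C :: 'u set. (C \<inter> A = {}) = (A \<inter> C = {})" by blast
  show "cond_B1 M \<phi> \<and> cond_B2 M \<phi> \<and> cond_B3 M \<phi>"
    unfolding cond_B1_def cond_B2_def cond_B3_def
  proof (intro conjI allI impI ballI)
    fix S A B C D x
    assume h: "finite S \<and> A \<subseteq> S \<and> B \<subseteq> S \<and> C \<subseteq> S \<and> D \<subseteq> S \<and> A \<inter> B = {} \<and> C \<inter> D = {} \<and> A \<inter> C = {} \<and> B \<inter> D = {}"
      and x: "x \<in> M (S - A - B)"
    have "C \<inter> A = {}" "D \<inter> B = {}" using h by blast+
    then show "\<phi> (S - C) D A (\<phi> (S - A) C B x) = \<phi> (S - D) C B (\<phi> (S - B) D A x)"
      using G[of S A B C D x] EE_eq(1)[of S A B D C \<phi> x] h x by simp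
  next
    fix S A B C D x
    assume h: "finite S \<and> A \<subseteq> S \<and> B \<subseteq> S \<and> C \<subseteq> S \<and> D \<subseteq> S \<and> A \<inter> B = {} \<and> C \<inter> D = {} \<and> A \<inter> C = {} \<and> B \<inter> D \<noteq> {}"
      and x: "x \<in> M (S - A - B)"
    have "C \<inter> A = {}" "D \<inter> B \<noteq> {}" using h by blast+
    then show "\<phi> (S - C) D A (\<phi> (S - A) C B x) = (\<Sum>X\<in>Pow (B \<inter> D) - {{}}. \<phi> (S - X) (D - X \<union> C) (A \<union> (B - X)) x)"
      using G[of S A B C D x] EE_eq(1)[of S A B D C \<phi> x] h x by simp
  next
    fix S A B C D x
    assume h: "finite S \<and> A \<subseteq> S \<and> B \<subseteq> S \<and> C \<subseteq> S \<and> D \<subseteq> S \<and> A \<inter> B = {} \<and> C \<inter> D = {} \<and> A \<inter> C \<noteq> {} \<and> B \<inter> D \<noteq> {}"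
      and x: "x \<in> M (S - A - B)"
    have "C \<inter> A \<noteq> {}" "D \<inter> B \<noteq> {}" using h by blast+
    then have "(\<Sum>U\<in>Pow (B \<inter> D) - {{}}. \<phi> (S - U) ((D - U) \<union> C) (A \<union> (B - U)) x) =
         (\<Sum>U\<in>Pow (A \<inter> C) - {{}}. \<phi> (S - U) ((C - U) \<union> D) (B \<union> (A - U)) x)"
      using G[of S A B C D x] EE_eq(1)[of S A B D C \<phi> x] h x by simp
    then show "(\<Sum>X\<in>Pow (B \<inter> D). \<phi> (S - X) (D - X \<union> C) (A \<union> (B - X)) x) =
         (\<Sum>X\<in>Pow (A \<inter> C). \<phi> (S - X) (C - X \<union> D) (B \<union> (A - X)) x)"
      using G3[of S A B C D x] h by blast
  qed
qed

theorem proposition7p4: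
  fixes scale :: "'k::comm_ring_1 \<Rightarrow> 'm::ab_group_add \<Rightarrow> 'm"
    and M :: "'u set \<Rightarrow> 'm set"
    and act :: "('u \<Rightarrow> 'u) \<Rightarrow> 'u set \<Rightarrow> 'm \<Rightarrow> 'm"
    and a :: "'u set \<Rightarrow> ('u set \<Rightarrow> 'm) \<Rightarrow> 'u set \<Rightarrow> 'm"
    and \<phi> :: "'u set \<Rightarrow> 'u set \<Rightarrow> 'u set \<Rightarrow> 'm \<Rightarrow> 'm"
  assumes "FB_module scale M act"
    and "PM_linear_endo scale M a"
    and "assoc_op M a \<phi>"
    and "natural_op M act \<phi>"
  shows "is_weyl_rep M a \<longleftrightarrow> (cond_B1 M \<phi> \<and> cond_B2 M \<phi> \<and> cond_B3 M \<phi>)"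
proof -
  have M0: "\<And>T. finite T \<Longrightarrow> 0 \<in> M T"
    and Madd: "\<And>T x y. finite T \<Longrightarrow> x \<in> M T \<Longrightarrow> y \<in> M T \<Longrightarrow> x + y \<in> M T"
  proof -
    have h: "\<forall>S. finite S \<longrightarrow> 0 \<in> M S \<and> (\<forall>x\<in>M S. \<forall>y\<in>M S. x + y \<in> M S) \<and> (\<forall>c. \<forall>x\<in>M S. scale c x \<in> M S)"
      using assms(1) unfolding FB_module_def by (elim conjE)
    show "\<And>T. finite T \<Longrightarrow> 0 \<in> M T" "\<And>T x y. finite T \<Longrightarrow> x \<in> M T \<Longrightarrow> y \<in> M T \<Longrightarrow> x + y \<in> M T"
      using h by simp_all
  qed
  have a_pres: "\<And>S f. finite S \<Longrightarrow> PM_elem M S f \<Longrightarrow> PM_elem M S (a S f)"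
    and a_add: "\<And>S f g. finite S \<Longrightarrow> PM_elem M S f \<Longrightarrow> PM_elem M S g \<Longrightarrow>
        a S (\<lambda>B. f B + g B) = (\<lambda>A. a S f A + a S g A)"
    using assms(2) unfolding PM_linear_endo_def by simp_all
  show ?thesis
    by (simp only: weyl_iff_EE[OF M0 Madd a_pres a_add assms(3)] conds_iff[of M \<phi>])
qed

end
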